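(* Let $G_S(s)=\frac{N_S(s)}{D_S(s)}$ and $G_T(s)=\frac{N_T(s)}{D_T(s)}$ be rational transfer functions of two continuous-time, single-input single-output, linear time-invariant systems (the source system and the target system), each written with coprime real polynomials and nonzero numerator. Assume both $G_S$ and $G_T$ are BIBO stable, and assume $G_S$ is minimum-phase. Then there exists a causal, BIBO stable rational transfer function $G_\alpha(s)$ (the transfer map from the source system to the target system) achieving perfect transfer learning, i.e. such that $G_\alpha(s)G_S(s)=G_T(s)$ (equivalently, for every bounded input $d$, feeding the source output $y_s$ with $Y_s(s)=G_S(s)D(s)$ into $G_\alpha$ yields exactly the target output $y_t$ with $Y_t(s)=G_T(s)D(s)$), if and only if the relative degree of $G_S$ is less than or equal to the relative degree of $G_T$. *)

theory Defs
  imports "HOL-Computational_Algebra.Polynomial_Factorial" Complex_Main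
begin

text \<open>A SISO LTI continuous-time rational transfer function G(s) = N(s)/D(s) is represented
  by a pair of real polynomials (N, D), written in lowest terms (coprime) with D nonzero.\<close>
definition rtf :: "real poly \<Rightarrow> real poly \<Rightarrow> bool" where
  "rtf N D \<longleftrightarrow> D \<noteq> 0 \<and> coprime N D"

definition poles :: "real poly \<Rightarrow> complex set" where
  "poles D = {z. poly (map_poly complex_of_real D) z = 0}"

definition zeros :: "real poly \<Rightarrow> complex set" where
  "zeros N = {z. poly (map_poly complex_of_real N) z = 0}"

definition causal_tf :: "real poly \<Rightarrow> real poly \<Rightarrow> bool" where
  "causal_tf N D \<longleftrightarrow> degree N \<le> degree D"

text \<open>BIBO stability of a rational transfer function in lowest terms:
  proper and all poles in the open left half plane.\<close>
definition bibo_stable :: "real poly \<Rightarrow> real poly \<Rightarrow> bool" where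
  "bibo_stable N D \<longleftrightarrow> degree N \<le> degree D \<and> (\<forall>z\<in>poles D. Re z < 0)"

definition minimum_phase :: "real poly \<Rightarrow> real poly \<Rightarrow> bool" where
  "minimum_phase N D \<longleftrightarrow> (\<forall>z\<in>zeros N. Re z < 0)"

definition rel_degree :: "real poly \<Rightarrow> real poly \<Rightarrow> int" where
  "rel_degree N D = int (degree D) - int (degree N)"

end

theory Submission
  imports Defs "HOL-Computational_Algebra.Field_as_Ring"
begin

lemma map_poly_of_real_add:
  "map_poly (complex_of_real) (p + q) = map_poly complex_of_real p + map_poly complex_of_real q"
  by (rule poly_eqI) (simp add: coeff_map_poly)

lemma map_poly_of_real_mult:
  "map_poly (complex_of_real) (p * q) = map_poly complex_of_real p * map_poly complex_of_real q"
  by (induction p) (auto simp: map_poly_pCons map_poly_smult map_poly_of_real_add)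

theorem theorem1:
  fixes NS DS NT DT :: "real poly"
  assumes "rtf NS DS" and "NS \<noteq> 0"
    and "rtf NT DT" and "NT \<noteq> 0"
    and "bibo_stable NS DS" and "bibo_stable NT DT"
    and "minimum_phase NS DS"
  shows "(\<exists>Na Da. rtf Na Da \<and> causal_tf Na Da \<and> bibo_stable Na Da
              \<and> Na * NS * DT = NT * Da * DS)
         \<longleftrightarrow> rel_degree NS DS \<le> rel_degree NT DT"
proof
  assume "\<exists>Na Da. rtf Na Da \<and> causal_tf Na Da \<and> bibo_stable Na Da
              \<and> Na * NS * DT = NT * Da * DS"
  then obtain Na Da where h: "rtf Na Da" "causal_tf Na Da" "Na * NS * DT = NT * Da * DS" by blast
  have DS: "DS \<noteq> 0" "DT \<noteq> 0" "Da \<noteq> 0" using assms h by (auto simp: rtf_def)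
  have "NT * Da * DS \<noteq> 0" using DS assms by auto
  then have "Na \<noteq> 0" using h by auto
  have "degree (Na * NS * DT) = degree (NT * Da * DS)" using h by simp
  then have "degree Na + degree NS + degree DT = degree NT + degree Da + degree DS"
    using DS assms \<open>Na \<noteq> 0\<close> by (simp add: degree_mult_eq)
  then show "rel_degree NS DS \<le> rel_degree NT DT"
    using h(2) by (simp add: rel_degree_def causal_tf_def)
next
  assume rd: "rel_degree NS DS \<le> rel_degree NT DT"
  have DS: "DS \<noteq> 0" "DT \<noteq> 0" using assms by (auto simp: rtf_def)
  define a where "a = NT * DS"
  define b where "b = DT * NS"
  define g where "g = gcd a b"
  define Na where "Na = a div g"
  define Da where "Da = b div g"
  have a0: "a \<noteq> 0" and b0: "b \<noteq> 0" using DS assms by (auto simp: a_def b_def)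
  have g0: "g \<noteq> 0" using a0 by (simp add: g_def)
  have aeq: "a = g * Na" unfolding Na_def g_def by simp
  have beq: "b = g * Da" unfolding Da_def g_def by simp
  have Na0: "Na \<noteq> 0" and Da0: "Da \<noteq> 0" using a0 b0 aeq beq by auto
  have cop: "coprime Na Da" unfolding Na_def Da_def g_def using a0 by (intro div_gcd_coprime) auto
  have dega: "degree a = degree g + degree Na" using aeq g0 Na0 by (simp add: degree_mult_eq)
  have degb: "degree b = degree g + degree Da" using beq g0 Da0 by (simp add: degree_mult_eq)
  have "degree a = degree NT + degree DS" using DS assms by (simp add: a_def degree_mult_eq)
  moreover have "degree b = degree DT + degree NS" using DS assms by (simp add: b_def degree_mult_eq)
  ultimately have deg: "degree Na \<le> degree Da" using dega degb rd by (simp add: rel_degree_def)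
  have poles: "\<forall>z\<in>poles Da. Re z < 0"
  proof
    fix z assume "z \<in> poles Da"
    then have "poly (map_poly complex_of_real Da) z = 0" by (simp add: poles_def)
    then have "poly (map_poly complex_of_real b) z = 0" by (simp add: beq map_poly_of_real_mult)
    then have "poly (map_poly complex_of_real DT) z = 0 \<or> poly (map_poly complex_of_real NS) z = 0"
      by (simp add: b_def map_poly_of_real_mult)
    then show "Re z < 0" using assms(6,7)
      by (auto simp: bibo_stable_def minimum_phase_def poles_def zeros_def)
  qed
  have eq: "Na * NS * DT = NT * Da * DS"
  proof -
    have "g * (Na * NS * DT) = g * (NT * Da * DS)"
      using aeq beq unfolding a_def b_def by (metis mult.commute mult.left_commute)
    then show ?thesis using g0 by simp
  qed
  show "\<exists>Na Da. rtf Na Da \<and> causal_tf Na Da \<and> bibo_stable Na Da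
              \<and> Na * NS * DT = NT * Da * DS"
    using Da0 cop deg poles eq
    by (intro exI[of _ Na] exI[of _ Da]) (auto simp: rtf_def causal_tf_def bibo_stable_def)
qed

end
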